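(* Let $\{z_n\}_{n\ge 0}$ be a sequence of positive real numbers satisfying $$(\alpha_1n+\alpha_0)z_{n+1}=(\beta_1n+\beta_0)z_n-(\gamma_1n+\gamma_0)z_{n-1}\quad (n\ge 1),$$ where $\alpha_1n+\alpha_0$, $\beta_1n+\beta_0$, $\gamma_1n+\gamma_0$ are positive for all $n\ge 1$. Put $A=\beta_0\gamma_1-\beta_1\gamma_0$, $B=\gamma_0\alpha_1-\gamma_1\alpha_0$, $C=\alpha_0\beta_1-\alpha_1\beta_0$. Suppose $z_0z_2\le z_1^2$. Then $\{z_n\}_{n\ge 0}$ is log-concave if one of the following holds: (i) $B\le 0$ and $C\le 0$; (ii) $B<0$, $C>0$, $AC\le B^2$ and $z_0B+z_1C\le 0$; (iii) $B>0$, $C<0$, $AC\ge B^2$ and $z_0B+z_1C\le 0$.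
   Context: A sequence $a_0,a_1,\ldots$ of nonnegative real numbers is log-concave if $a_{k-1}a_{k+1}\le a_k^2$ for all $k\ge 1$. *)

theory Defs
  imports Complex_Main
begin

definition log_concave :: "(nat \<Rightarrow> real) \<Rightarrow> bool" where
  "log_concave a \<longleftrightarrow> (\<forall>k. a k \<ge> 0) \<and> (\<forall>k\<ge>1. a (k - 1) * a (k + 1) \<le> (a k)\<^sup>2)"

end

theory Submission
  imports Defs
begin

theorem theorem3p11:
  fixes z :: "nat \<Rightarrow> real"
    and \<alpha>1 \<alpha>0 \<beta>1 \<beta>0 \<gamma>1 \<gamma>0 A B C :: real
  assumes pos: "\<And>n. z n > 0"
    and rec: "\<And>n. n \<ge> 1 \<Longrightarrow>
      (\<alpha>1 * real n + \<alpha>0) * z (n + 1) = (\<beta>1 * real n + \<beta>0) * z n - (\<gamma>1 * real n + \<gamma>0) * z (n - 1)"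
    and apos: "\<And>n. n \<ge> 1 \<Longrightarrow> \<alpha>1 * real n + \<alpha>0 > 0"
    and bpos: "\<And>n. n \<ge> 1 \<Longrightarrow> \<beta>1 * real n + \<beta>0 > 0"
    and cpos: "\<And>n. n \<ge> 1 \<Longrightarrow> \<gamma>1 * real n + \<gamma>0 > 0"
    and A_def: "A = \<beta>0 * \<gamma>1 - \<beta>1 * \<gamma>0"
    and B_def: "B = \<gamma>0 * \<alpha>1 - \<gamma>1 * \<alpha>0"
    and C_def: "C = \<alpha>0 * \<beta>1 - \<alpha>1 * \<beta>0"
    and init: "z 0 * z 2 \<le> (z 1)\<^sup>2"
    and cases: "(B \<le> 0 \<and> C \<le> 0)
      \<or> (B < 0 \<and> C > 0 \<and> A * C \<le> B\<^sup>2 \<and> z 0 * B + z 1 * C \<le> 0)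
      \<or> (B > 0 \<and> C < 0 \<and> A * C \<ge> B\<^sup>2 \<and> z 0 * B + z 1 * C \<le> 0)"
  shows "log_concave z"
proof -
  define a where "a = (\<lambda>n::nat. \<alpha>1 * real n + \<alpha>0)"
  define b where "b = (\<lambda>n::nat. \<beta>1 * real n + \<beta>0)"
  define c where "c = (\<lambda>n::nat. \<gamma>1 * real n + \<gamma>0)"
  define x where "x = (\<lambda>n. z n / z (n - 1))"
  have xpos: "x n > 0" for n using pos unfolding x_def by simp
  have xrec: "a n * x (n+1) = b n - c n / x n" if "n \<ge> 1" for n
  proof -
    have "a n * z (n+1) = b n * z n - c n * z (n-1)" using rec[OF that] unfolding a_def b_def c_def .
    hence "a n * z (n+1) / z n = b n - c n * z (n-1) / z n" using pos[of n]
      by (simp add: field_simps)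
    thus ?thesis unfolding x_def using pos[of n] pos[of "n-1"] by (simp add: field_simps)
  qed
  have lc_iff: "z (k - 1) * z (k + 1) \<le> (z k)\<^sup>2 \<longleftrightarrow> x (k+1) \<le> x k" if "k \<ge> 1" for k
  proof -
    have "x (k+1) \<le> x k \<longleftrightarrow> z (k+1) / z k \<le> z k / z (k-1)" unfolding x_def by simp
    also have "\<dots> \<longleftrightarrow> z (k+1) * z (k-1) \<le> z k * z k" using pos[of k] pos[of "k-1"]
      by (simp add: divide_le_eq le_divide_eq mult.commute)
    finally show ?thesis by (simp add: power2_eq_square mult.commute)
  qed
  have idA: "a k * A + b k * B + c k * C = 0" for k
    unfolding a_def b_def c_def A_def B_def C_def by (simp add: algebra_simps)
  have idC: "a (n-1) * b n - a n * b (n-1) = C" and idB: "a (n-1) * c n - a n * c (n-1) = - B"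
    if "n \<ge> 1" for n
    using that unfolding a_def b_def c_def B_def C_def by (auto simp: algebra_simps of_nat_diff)
  have key: "x (n+1) \<le> x n" if n2: "n \<ge> 2" and h1: "x n \<le> x (n-1)" and h2: "B + C * x (n-1) \<le> 0" for n
  proof -
    define y where "y = x (n-1)"
    have ypos: "y > 0" using xpos y_def by simp
    have an: "a n > 0" using apos[of n] n2 unfolding a_def by simp
    have an1: "a (n-1) > 0" using apos[of "n-1"] n2 unfolding a_def by (simp add: of_nat_diff)
    have cn: "c n > 0" using cpos[of n] n2 unfolding c_def by simp
    have e1: "a n * x (n+1) = b n - c n / x n" using xrec[of n] n2 by simp
    have e2: "a (n-1) * x n = b (n-1) - c (n-1) / y" using xrec[of "n-1"] n2 y_def by simp
    have "c n / y \<le> c n / x n" using h1 xpos[of n] cn y_def by (simp add: frac_le)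
    hence i1: "a n * x (n+1) \<le> b n - c n / y" using e1 by simp
    have "a (n-1) * (a n * x (n+1)) \<le> a (n-1) * (b n - c n / y)"
      using i1 an1 by (simp add: mult_left_mono)
    also have "\<dots> = a n * (b (n-1) - c (n-1) / y) + (C + B / y)"
    proof -
      have "a (n-1) * (b n - c n / y) - a n * (b (n-1) - c (n-1) / y)
          = (a (n-1) * b n - a n * b (n-1)) - (a (n-1) * c n - a n * c (n-1)) / y"
        by (simp add: algebra_simps diff_divide_distrib add_divide_distrib)
      also have "\<dots> = C + B / y" using idC[of n] idB[of n] n2 by simp
      finally show ?thesis by simp
    qed
    also have "\<dots> \<le> a n * (b (n-1) - c (n-1) / y)"
    proof -
      have "C + B / y = (B + C * y) / y" using ypos by (simp add: field_simps)
      also have "\<dots> \<le> 0" using h2 ypos y_def by (simp add: divide_nonpos_pos)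
      finally show ?thesis by simp
    qed
    also have "\<dots> = a (n-1) * (a n * x n)" using e2 by (metis mult.commute mult.left_commute)
    finally have "a (n-1) * a n * x (n+1) \<le> a (n-1) * a n * x n" by (simp add: mult.assoc)
    thus ?thesis using an an1 by (simp add: mult_le_cancel_left_pos)
  qed
  have x1: "x 1 = z 1 / z 0" unfolding x_def by simp
  have x21: "x 2 \<le> x 1" using lc_iff[of 1] init by (simp add: numeral_2_eq_2)
  have bc1: "B + C * x 1 \<le> 0" if "z 0 * B + z 1 * C \<le> 0"
  proof -
    have "B + C * x 1 = (z 0 * B + z 1 * C) / z 0" using pos[of 0] x1 by (simp add: field_simps)
    thus ?thesis using that pos[of 0] by (simp add: divide_nonpos_pos)
  qed
  have main: "x (n+1) \<le> x n \<and> x n \<le> x 1 \<and> B + C * x n \<le> 0" if "n \<ge> 1" for n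
    using that
  proof (induction n rule: dec_induct)
    case base
    have "B + C * x 1 \<le> 0"
    proof -
      have "C \<le> 0 \<Longrightarrow> B \<le> 0 \<Longrightarrow> ?thesis"
      proof -
        assume "C \<le> 0" "B \<le> 0"
        hence "C * x 1 \<le> 0" using xpos[of 1] by (simp add: mult_nonpos_nonneg)
        thus ?thesis using \<open>B \<le> 0\<close> by linarith
      qed
      thus ?thesis using cases bc1 by linarith
    qed
    thus ?case using x21 by (simp add: numeral_2_eq_2)
  next
    case (step m)
    have m1: "x (m+2) \<le> x (m+1)" using key[of "m+1"] step by simp
    have m2: "x (m+1) \<le> x 1" using step by simp
    have m3: "B + C * x (m+1) \<le> 0"
    proof -
      consider "B \<le> 0 \<and> C \<le> 0" | "B < 0 \<and> C > 0 \<and> z 0 * B + z 1 * C \<le> 0"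
        | "B > 0 \<and> C < 0 \<and> A * C \<ge> B\<^sup>2" using cases by blast
      thus ?thesis
      proof cases
        case 1
        hence "C * x (m+1) \<le> 0" using xpos[of "m+1"] by (simp add: mult_nonpos_nonneg)
        thus ?thesis using 1 by linarith
      next
        case 2
        have "C * x (m+1) \<le> C * x 1" using m2 2 by (simp add: mult_left_mono)
        thus ?thesis using bc1 2 by linarith
      next
        case 3
        define t where "t = - B / C"
        have tpos: "t > 0" using 3 t_def by (simp add: divide_pos_neg)
        have Ct: "C * t = - B" using 3 t_def by simp
        have "x m \<ge> t"
        proof -
          have "C * x m \<le> C * t" using Ct step by linarith
          thus ?thesis using 3 by (simp add: mult_le_cancel_left)
        qed
        have am: "a m > 0" using apos[of m] step unfolding a_def by simp
        have cm: "c m > 0" using cpos[of m] step unfolding c_def by simp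
        have q: "a m * t * t - b m * t + c m \<le> 0"
        proof -
          have "C * C * (a m * t * t - b m * t + c m) = a m * B * B + b m * B * C + c m * C * C"
          proof -
            have "C * C * (a m * t * t - b m * t + c m) = a m * (C*t) * (C*t) - b m * (C*t) * C + c m * C * C"
              by (simp add: algebra_simps)
            thus ?thesis using Ct by simp
          qed
          also have "\<dots> = a m * (B * B - A * C)"
          proof -
            have bB: "b m * B = - a m * A - c m * C" using idA[of m] by linarith
            have q0: "b m * B * C = (- a m * A - c m * C) * C" using bB by metis
            have q2: "a m * B * B + (- a m * A - c m * C) * C + c m * C * C = a m * (B * B - A * C)"
              by (simp add: algebra_simps)
            show ?thesis by (subst q0) (rule q2)
          qed
          also have "\<dots> \<le> 0" using am 3 by (simp add: mult_nonneg_nonpos power2_eq_square)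
          finally have "C * C * (a m * t * t - b m * t + c m) \<le> 0" .
          moreover have "C * C > 0" using 3 by (simp add: mult_neg_neg)
          ultimately show ?thesis by (meson mult_le_0_iff not_le)
        qed
        have "a m * x (m+1) = b m - c m / x m" using xrec step by simp
        also have "\<dots> \<ge> b m - c m / t" using \<open>x m \<ge> t\<close> tpos cm by (simp add: frac_le)
        finally have "a m * x (m+1) \<ge> b m - c m / t" .
        moreover have "b m - c m / t \<ge> a m * t"
        proof -
          have "a m * t * t \<le> b m * t - c m" using q by linarith
          hence "a m * t \<le> (b m * t - c m) / t" using tpos by (simp add: le_divide_eq)
          thus ?thesis using tpos by (simp add: diff_divide_distrib)
        qed
        ultimately have "a m * x (m+1) \<ge> a m * t" by linarith
        hence "x (m+1) \<ge> t" using am by (simp add: mult_le_cancel_left_pos)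
        hence "C * x (m+1) \<le> C * t" using 3 by (simp add: mult_le_cancel_left)
        thus ?thesis using Ct by linarith
      qed
    qed
    show ?case using m1 m2 m3 step by (simp add: add.commute)
  qed
  show ?thesis unfolding log_concave_def
  proof (intro conjI allI impI)
    fix k show "z k \<ge> 0" using pos[of k] by simp
  next
    fix k :: nat assume "k \<ge> 1"
    thus "z (k - 1) * z (k + 1) \<le> (z k)\<^sup>2" using lc_iff main by blast
  qed
qed

end
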